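(* Let $P$ be a finite poset and let $x$ be a maximal element or a minimal element of $P$. Then the toggleability statistic $\mathfrak{T}_x$ is $0$-mesic under rowmotion on $\mathcal{IC}(P)$, i.e. its average over every rowmotion orbit is $0$.
   Context: All posets are finite. For a poset $P$, a subset $I\subseteq P$ is interval-closed if for all $x,y\in I$ and $z\in P$ with $x\le z\le y$ we have $z\in I$; $\mathcal{IC}(P)$ is the set of interval-closed subsets of $P$. For $x\in P$ the toggle $t_x:\mathcal{IC}(P)\to\mathcal{IC}(P)$ is defined by $t_x(I)=I\triangle\{x\}$ if $I\triangle\{x\}\in\mathcal{IC}(P)$ and $t_x(I)=I$ otherwise. Rowmotion is $\mathrm{Row}=t_{x_1}\circ t_{x_2}\circ\cdots\circ t_{x_N}:\mathcal{IC}(P)\to\mathcal{IC}(P)$, where $(x_1,\dots,x_N)$ is a linear extension of $P$ (so elements are toggled from the top of the poset down); this does not depend on the choice of linear extension. The toggleability statistic $\mathfrak{T}_x:\mathcal{IC}(P)\to\{-1,0,1\}$ is $\mathfrak{T}_x(I)=1$ if $x\notin I$ and $I\cup\{x\}\in\mathcal{IC}(P)$; $\mathfrak{T}_x(I)=-1$ if $x\in I$ and $I-\{x\}\in\mathcal{IC}(P)$; and $0$ otherwise. A statistic is $c$-mesic under rowmotion if its average over each rowmotion orbit equals $c$. *)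

theory Defs
  imports Complex_Main
begin

definition interval_closed :: "('a::order) set \<Rightarrow> bool" where
  "interval_closed I \<longleftrightarrow> (\<forall>x\<in>I. \<forall>y\<in>I. \<forall>z. x \<le> z \<and> z \<le> y \<longrightarrow> z \<in> I)"

definition IC :: "('a::order) set set" where
  "IC = {I. interval_closed I}"

definition symdiff :: "'a set \<Rightarrow> 'a set \<Rightarrow> 'a set" where
  "symdiff A B = (A - B) \<union> (B - A)"

definition toggle :: "('a::order) \<Rightarrow> 'a set \<Rightarrow> 'a set" where
  "toggle x I = (if interval_closed (symdiff I {x}) then symdiff I {x} else I)"

definition linear_extension :: "('a::{finite,order}) list \<Rightarrow> bool" where
  "linear_extension xs \<longleftrightarrow> distinct xs \<and> set xs = UNIV \<and>
     (\<forall>i j. i < length xs \<and> j < length xs \<and> xs ! i < xs ! j \<longrightarrow> i < j)"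

text \<open>Rowmotion w.r.t. linear extension [x1,...,xN]: t_x1 o ... o t_xN.\<close>
definition rowmotion :: "('a::order) list \<Rightarrow> 'a set \<Rightarrow> 'a set" where
  "rowmotion xs I = foldr toggle xs I"

definition toggleability :: "('a::order) \<Rightarrow> 'a set \<Rightarrow> int" where
  "toggleability x I =
     (if x \<notin> I \<and> interval_closed (I \<union> {x}) then 1
      else if x \<in> I \<and> interval_closed (I - {x}) then -1 else 0)"

definition orbit :: "('b \<Rightarrow> 'b) \<Rightarrow> 'b \<Rightarrow> 'b set" where
  "orbit f I = {(f ^^ k) I | k. True}"

definition mesic :: "real \<Rightarrow> ('b \<Rightarrow> 'b) \<Rightarrow> ('b \<Rightarrow> real) \<Rightarrow> 'b set \<Rightarrow> bool" where
  "mesic c f stat S \<longleftrightarrow>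
     (\<forall>I\<in>S. (\<Sum>J\<in>orbit f I. stat J) / real (card (orbit f I)) = c)"

end

theory Submission
  imports Defs
begin

lemma symdiff_single: "symdiff I {y} = (if y \<in> I then I - {y} else I \<union> {y})"
  unfolding symdiff_def by auto

lemma toggle_IC: "interval_closed I \<Longrightarrow> interval_closed (toggle y I)"
  unfolding toggle_def by auto

lemma toggle_other: "w \<noteq> y \<Longrightarrow> (w \<in> toggle y I) = (w \<in> I)"
  unfolding toggle_def symdiff_single by auto

lemma toggle_invol: "interval_closed I \<Longrightarrow> toggle y (toggle y I) = I"
proof -
  assume a: "interval_closed I"
  have e: "symdiff (symdiff I {y}) {y} = I" unfolding symdiff_def by auto
  show ?thesis
  proof (cases "interval_closed (symdiff I {y})")
    case True
    then show ?thesis using a e by (simp add: toggle_def)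
  next
    case False
    then show ?thesis by (simp add: toggle_def)
  qed
qed

lemma foldr_IC: "interval_closed I \<Longrightarrow> interval_closed (foldr toggle ys I)"
  by (induction ys) (auto intro: toggle_IC)

lemma foldr_other: "(\<forall>y\<in>set ys. w \<noteq> y) \<Longrightarrow> (w \<in> foldr toggle ys I) = (w \<in> I)"
  by (induction ys) (auto simp: toggle_other)

lemma foldr_inj: "interval_closed A \<Longrightarrow> interval_closed B \<Longrightarrow>
   foldr toggle ys A = foldr toggle ys B \<Longrightarrow> A = B"
proof (induction ys)
  case Nil
  then show ?case by simp
next
  case (Cons y ys)
  have "toggle y (toggle y (foldr toggle ys A)) = toggle y (toggle y (foldr toggle ys B))"
    using Cons.prems by simp
  then have "foldr toggle ys A = foldr toggle ys B"
    using toggle_invol foldr_IC Cons.prems by metis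
  then show ?case using Cons by blast
qed

definition chi :: "'a \<Rightarrow> 'a set \<Rightarrow> int" where
  "chi x J = (if x \<in> J then 1 else 0)"

lemma tog_A: "interval_closed J \<Longrightarrow> toggleability x J = chi x (toggle x J) - chi x J"
  unfolding toggleability_def chi_def toggle_def symdiff_single
  by (auto simp: insert_absorb)

lemma tog_B: "interval_closed J \<Longrightarrow> toggleability x (toggle x J) = chi x J - chi x (toggle x J)"
  unfolding toggleability_def chi_def toggle_def symdiff_single
  by (auto simp: insert_absorb)

lemma max_add:
  assumes J: "interval_closed (J::'a::order set)" and m: "\<forall>y. x \<le> y \<longrightarrow> y = x" and "x \<notin> J"
  shows "interval_closed (J \<union> {x}) \<longleftrightarrow> (\<forall>a\<in>J. \<forall>z. a \<le> z \<and> z \<le> x \<longrightarrow> z \<in> J \<or> z = x)"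
proof
  assume "interval_closed (J \<union> {x})"
  then show "\<forall>a\<in>J. \<forall>z. a \<le> z \<and> z \<le> x \<longrightarrow> z \<in> J \<or> z = x"
    unfolding interval_closed_def by blast
next
  assume c: "\<forall>a\<in>J. \<forall>z. a \<le> z \<and> z \<le> x \<longrightarrow> z \<in> J \<or> z = x"
  show "interval_closed (J \<union> {x})" unfolding interval_closed_def
  proof (intro ballI allI impI)
    fix a b z assume a: "a \<in> J \<union> {x}" and b: "b \<in> J \<union> {x}" and z: "a \<le> z \<and> z \<le> b"
    show "z \<in> J \<union> {x}"
    proof (cases "a = x")
      case True
      then have "z = x" using m z by auto
      then show ?thesis by simp
    next
      case False
      then have aJ: "a \<in> J" using a by simp
      show ?thesis
      proof (cases "b = x")
        case True then show ?thesis using c aJ z by auto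
      next
        case False then have "b \<in> J" using b by simp
        then show ?thesis using J aJ z unfolding interval_closed_def by blast
      qed
    qed
  qed
qed

lemma max_rem:
  assumes J: "interval_closed (J::'a::order set)" and m: "\<forall>y. x \<le> y \<longrightarrow> y = x"
  shows "interval_closed (J - {x})"
  unfolding interval_closed_def
proof (intro ballI allI impI)
  fix a b z assume a: "a \<in> J - {x}" and b: "b \<in> J - {x}" and z: "a \<le> z \<and> z \<le> b"
  have "z \<in> J" using J a b z unfolding interval_closed_def by blast
  moreover have "z \<noteq> x" using m b z by auto
  ultimately show "z \<in> J - {x}" by simp
qed

lemma min_add:
  assumes J: "interval_closed (J::'a::order set)" and m: "\<forall>y. y \<le> x \<longrightarrow> y = x" and "x \<notin> J"
  shows "interval_closed (J \<union> {x}) \<longleftrightarrow> (\<forall>b\<in>J. \<forall>z. x \<le> z \<and> z \<le> b \<longrightarrow> z \<in> J \<or> z = x)"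
proof
  assume "interval_closed (J \<union> {x})"
  then show "\<forall>b\<in>J. \<forall>z. x \<le> z \<and> z \<le> b \<longrightarrow> z \<in> J \<or> z = x"
    unfolding interval_closed_def by blast
next
  assume c: "\<forall>b\<in>J. \<forall>z. x \<le> z \<and> z \<le> b \<longrightarrow> z \<in> J \<or> z = x"
  show "interval_closed (J \<union> {x})" unfolding interval_closed_def
  proof (intro ballI allI impI)
    fix a b z assume a: "a \<in> J \<union> {x}" and b: "b \<in> J \<union> {x}" and z: "a \<le> z \<and> z \<le> b"
    show "z \<in> J \<union> {x}"
    proof (cases "b = x")
      case True
      then have "z = x" using m z by auto
      then show ?thesis by simp
    next
      case False
      then have bJ: "b \<in> J" using b by simp
      show ?thesis
      proof (cases "a = x")
        case True then show ?thesis using c bJ z by auto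
      next
        case False then have "a \<in> J" using a by simp
        then show ?thesis using J bJ z unfolding interval_closed_def by blast
      qed
    qed
  qed
qed

lemma min_rem:
  assumes J: "interval_closed (J::'a::order set)" and m: "\<forall>y. y \<le> x \<longrightarrow> y = x"
  shows "interval_closed (J - {x})"
  unfolding interval_closed_def
proof (intro ballI allI impI)
  fix a b z assume a: "a \<in> J - {x}" and b: "b \<in> J - {x}" and z: "a \<le> z \<and> z \<le> b"
  have "z \<in> J" using J a b z unfolding interval_closed_def by blast
  moreover have "z \<noteq> x" using m a z by auto
  ultimately show "z \<in> J - {x}" by simp
qed

lemma locality:
  assumes ext: "(\<forall>y. x \<le> y \<longrightarrow> y = x) \<or> (\<forall>y. y \<le> x \<longrightarrow> y = x)"
    and J: "interval_closed (J::'a::order set)" and J': "interval_closed J'"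
    and agree: "\<forall>w. (w \<le> x \<or> x \<le> w) \<longrightarrow> (w \<in> J \<longleftrightarrow> w \<in> J')"
  shows "toggleability x J = toggleability x J'"
proof -
  have xx: "x \<in> J \<longleftrightarrow> x \<in> J'" using agree by auto
  from ext show ?thesis
  proof
    assume m: "\<forall>y. x \<le> y \<longrightarrow> y = x"
    show ?thesis
    proof (cases "x \<in> J")
      case True
      then show ?thesis using xx max_rem[OF J m] max_rem[OF J' m]
        unfolding toggleability_def by auto
    next
      case False
      have pw: "((a\<in>J \<longrightarrow> z \<in> J \<or> z = x) \<longleftrightarrow> (a\<in>J' \<longrightarrow> z \<in> J' \<or> z = x))"
        if "a \<le> z" "z \<le> x" for a z
      proof -
        have "a \<le> x" using that order_trans by blast
        then have "a \<in> J \<longleftrightarrow> a \<in> J'" "z \<in> J \<longleftrightarrow> z \<in> J'" using agree that by auto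
        then show ?thesis by simp
      qed
      have "(\<forall>a\<in>J. \<forall>z. a \<le> z \<and> z \<le> x \<longrightarrow> z \<in> J \<or> z = x) \<longleftrightarrow>
            (\<forall>a\<in>J'. \<forall>z. a \<le> z \<and> z \<le> x \<longrightarrow> z \<in> J' \<or> z = x)"
        using pw by blast
      then show ?thesis using False xx max_add[OF J m] max_add[OF J' m]
        unfolding toggleability_def by auto
    qed
  next
    assume m: "\<forall>y. y \<le> x \<longrightarrow> y = x"
    show ?thesis
    proof (cases "x \<in> J")
      case True
      then show ?thesis using xx min_rem[OF J m] min_rem[OF J' m]
        unfolding toggleability_def by auto
    next
      case False
      have pw: "((b\<in>J \<longrightarrow> z \<in> J \<or> z = x) \<longleftrightarrow> (b\<in>J' \<longrightarrow> z \<in> J' \<or> z = x))"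
        if "x \<le> z" "z \<le> b" for b z
      proof -
        have "x \<le> b" using that order_trans by blast
        then have "b \<in> J \<longleftrightarrow> b \<in> J'" "z \<in> J \<longleftrightarrow> z \<in> J'" using agree that by auto
        then show ?thesis by simp
      qed
      have "(\<forall>b\<in>J. \<forall>z. x \<le> z \<and> z \<le> b \<longrightarrow> z \<in> J \<or> z = x) \<longleftrightarrow>
            (\<forall>b\<in>J'. \<forall>z. x \<le> z \<and> z \<le> b \<longrightarrow> z \<in> J' \<or> z = x)"
        using pw by blast
      then show ?thesis using False xx min_add[OF J m] min_add[OF J' m]
        unfolding toggleability_def by auto
    qed
  qed
qed

lemma foldr_incomp:
  assumes "\<forall>y\<in>set ys. \<not> y \<le> x \<and> \<not> x \<le> y"
  shows "\<forall>w. (w \<le> x \<or> x \<le> w) \<longrightarrow> (w \<in> foldr toggle ys I \<longleftrightarrow> w \<in> I)"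
proof (intro allI impI)
  fix w assume "w \<le> x \<or> x \<le> w"
  then have "\<forall>y\<in>set ys. w \<noteq> y" using assms by auto
  then show "w \<in> foldr toggle ys I \<longleftrightarrow> w \<in> I" by (rule foldr_other)
qed

lemma orbit_sum_zero:
  fixes f :: "'b \<Rightarrow> 'b" and h :: "'b \<Rightarrow> int"
  assumes fin: "finite (orbit f I)" and inj: "inj_on f (orbit f I)"
  shows "(\<Sum>J\<in>orbit f I. h (f J)) = (\<Sum>J\<in>orbit f I. h J)"
proof -
  let ?O = "orbit f I"
  have sub: "f ` ?O \<subseteq> ?O"
  proof
    fix y assume "y \<in> f ` ?O"
    then obtain k where "y = f ((f ^^ k) I)" unfolding orbit_def by auto
    then have "y = (f ^^ Suc k) I" by simp
    then show "y \<in> ?O" unfolding orbit_def by blast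
  qed
  have eq: "f ` ?O = ?O" using endo_inj_surj[OF fin sub inj] .
  have "(\<Sum>J\<in>?O. h J) = (\<Sum>J\<in>f ` ?O. h J)" using eq by simp
  also have "\<dots> = (\<Sum>J\<in>?O. h (f J))" using sum.reindex[OF inj] by simp
  finally show ?thesis by simp
qed

theorem proposition2p19:
  fixes x :: "'a::{finite,order}" and xs :: "'a list"
  assumes "linear_extension xs"
    and "(\<forall>y. x \<le> y \<longrightarrow> y = x) \<or> (\<forall>y. y \<le> x \<longrightarrow> y = x)"
  shows "mesic 0 (rowmotion xs) (\<lambda>I. real_of_int (toggleability x I)) IC"
proof -
  note le = assms(1)[unfolded linear_extension_def]
  have dist: "distinct xs" and allin: "set xs = UNIV"
    and ord: "\<forall>i j. i < length xs \<and> j < length xs \<and> xs ! i < xs ! j \<longrightarrow> i < j"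
    using le by auto
  obtain i where il: "i < length xs" and xi: "xs ! i = x"
    using allin by (metis UNIV_I in_set_conv_nth)
  define pre where "pre = take i xs"
  define suf where "suf = drop (Suc i) xs"
  have xs_eq: "xs = pre @ x # suf" unfolding pre_def suf_def using il xi id_take_nth_drop by metis
  have rowK: "rowmotion xs K = foldr toggle pre (toggle x (foldr toggle suf K))" for K
    unfolding rowmotion_def by (subst xs_eq) simp
  have xnpre: "x \<notin> set pre" and xnsuf: "x \<notin> set suf" using dist xs_eq by auto
  have suf_idx: "\<exists>j. i < j \<and> j < length xs \<and> xs ! j = y" if "y \<in> set suf" for y
  proof -
    from that obtain k where "k < length suf" "suf ! k = y" by (auto simp: in_set_conv_nth)
    then show ?thesis unfolding suf_def using il
      by (intro exI[of _ "Suc i + k"]) auto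
  qed
  have pre_idx: "\<exists>j. j < i \<and> xs ! j = y" if "y \<in> set pre" for y
  proof -
    from that obtain k where "k < length pre" "suf ! k = y \<or> pre ! k = y" by (auto simp: in_set_conv_nth)
    then show ?thesis using that unfolding pre_def using il
      by (metis in_set_conv_nth length_take min_less_iff_conj nth_take)
  qed
  let ?f = "rowmotion xs"
  let ?c = "chi x"
  have fIC: "interval_closed K \<Longrightarrow> interval_closed (?f K)" for K
    unfolding rowmotion_def by (rule foldr_IC)
  have chi_pre: "?c (foldr toggle pre L) = ?c L" for L
    unfolding chi_def using foldr_other[of pre x] xnpre by auto
  have chi_suf: "?c (foldr toggle suf L) = ?c L" for L
    unfolding chi_def using foldr_other[of suf x] xnsuf by auto
  have key: "(\<forall>K. interval_closed K \<longrightarrow> toggleability x K = ?c (?f K) - ?c K) \<or>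
             (\<forall>K. interval_closed K \<longrightarrow> toggleability x (?f K) = ?c K - ?c (?f K))"
    using assms(2)
  proof
    assume m: "\<forall>y. x \<le> y \<longrightarrow> y = x"
    have inc: "\<forall>y\<in>set suf. \<not> y \<le> x \<and> \<not> x \<le> y"
    proof
      fix y assume "y \<in> set suf"
      then obtain j where j: "i < j" "j < length xs" "xs ! j = y" using suf_idx by blast
      have ne: "y \<noteq> x" using xnsuf \<open>y \<in> set suf\<close> by auto
      have "\<not> y < x"
      proof
        assume "y < x"
        then have "xs ! j < xs ! i" using j xi by simp
        then have "j < i" using ord j(2) il by blast
        then show False using j(1) by simp
      qed
      then show "\<not> y \<le> x \<and> \<not> x \<le> y" using ne m by auto
    qed
    show ?thesis
    proof (intro disjI1 allI impI)
      fix K :: "'a set" assume K: "interval_closed K"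
      let ?J = "foldr toggle suf K"
      have JIC: "interval_closed ?J" using foldr_IC[OF K] .
      have "toggleability x K = toggleability x ?J"
        using locality[OF assms(2) K JIC] foldr_incomp[OF inc, of K] by auto
      also have "\<dots> = ?c (toggle x ?J) - ?c ?J" using tog_A[OF JIC] .
      also have "\<dots> = ?c (?f K) - ?c K" using rowK chi_pre chi_suf by simp
      finally show "toggleability x K = ?c (?f K) - ?c K" .
    qed
  next
    assume m: "\<forall>y. y \<le> x \<longrightarrow> y = x"
    have inc: "\<forall>y\<in>set pre. \<not> y \<le> x \<and> \<not> x \<le> y"
    proof
      fix y assume "y \<in> set pre"
      then obtain j where j: "j < i" "xs ! j = y" using pre_idx by blast
      have ne: "y \<noteq> x" using xnpre \<open>y \<in> set pre\<close> by auto
      have "\<not> x < y"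
      proof
        assume "x < y"
        then have "xs ! i < xs ! j" using j xi by simp
        then have "i < j" using ord j(1) il by (meson less_trans)
        then show False using j(1) by simp
      qed
      then show "\<not> y \<le> x \<and> \<not> x \<le> y" using ne m by auto
    qed
    show ?thesis
    proof (intro disjI2 allI impI)
      fix K :: "'a set" assume K: "interval_closed K"
      let ?J = "foldr toggle suf K"
      have JIC: "interval_closed ?J" using foldr_IC[OF K] .
      have LIC: "interval_closed (toggle x ?J)" using toggle_IC[OF JIC] .
      have "toggleability x (?f K) = toggleability x (toggle x ?J)"
        unfolding rowK
        using locality[OF assms(2) foldr_IC[OF LIC] LIC] foldr_incomp[OF inc, of "toggle x ?J"] by auto
      also have "\<dots> = ?c ?J - ?c (toggle x ?J)" using tog_B[OF JIC] .
      also have "\<dots> = ?c K - ?c (?f K)" using rowK chi_pre chi_suf by simp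
      finally show "toggleability x (?f K) = ?c K - ?c (?f K)" .
    qed
  qed
  show ?thesis unfolding mesic_def
  proof
    fix I :: "'a set" assume "I \<in> IC"
    then have I: "interval_closed I" by (simp add: IC_def)
    let ?O = "orbit ?f I"
    have Osub: "\<forall>J\<in>?O. interval_closed J"
    proof
      fix J assume "J \<in> ?O"
      then obtain k where "J = (?f ^^ k) I" unfolding orbit_def by auto
      moreover have "interval_closed ((?f ^^ k) I)" for k
        by (induction k) (auto simp: I fIC)
      ultimately show "interval_closed J" by simp
    qed
    have fin: "finite ?O" by (rule finite_subset[OF subset_UNIV]) simp
    have inj: "inj_on ?f ?O"
      unfolding inj_on_def
    proof (intro ballI impI)
      fix A B assume "A \<in> ?O" "B \<in> ?O" "?f A = ?f B"
      then show "A = B" using Osub foldr_inj[of A B xs] by (simp add: rowmotion_def)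
    qed
    have S: "(\<Sum>J\<in>?O. toggleability x J) = 0"
      using key
    proof
      assume k: "\<forall>K. interval_closed K \<longrightarrow> toggleability x K = ?c (?f K) - ?c K"
      have "(\<Sum>J\<in>?O. toggleability x J) = (\<Sum>J\<in>?O. ?c (?f J) - ?c J)"
        using k Osub by (intro sum.cong) auto
      also have "\<dots> = 0" using orbit_sum_zero[OF fin inj, of ?c] by (simp add: sum_subtractf)
      finally show ?thesis .
    next
      assume k: "\<forall>K. interval_closed K \<longrightarrow> toggleability x (?f K) = ?c K - ?c (?f K)"
      have "(\<Sum>J\<in>?O. toggleability x J) = (\<Sum>J\<in>?O. toggleability x (?f J))"
        using orbit_sum_zero[OF fin inj, of "toggleability x"] by simp
      also have "\<dots> = (\<Sum>J\<in>?O. ?c J - ?c (?f J))"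
        using k Osub by (intro sum.cong) auto
      also have "\<dots> = 0" using orbit_sum_zero[OF fin inj, of ?c] by (simp add: sum_subtractf)
      finally show ?thesis .
    qed
    have "(\<Sum>J\<in>?O. real_of_int (toggleability x J)) = 0"
      using S by (metis of_int_0 of_int_sum)
    then show "(\<Sum>J\<in>?O. real_of_int (toggleability x J)) / real (card ?O) = 0" by simp
  qed
qed

end
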